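(* Let $\mathcal{D}=(D,B,\mu)$ be a blueprint. For any two threshold functions $t_1,t_2:B\to[-1,1]$, $$|\mathsf{Soundness}(\mathcal{D},t_1)-\mathsf{Soundness}(\mathcal{D},t_2)|\le\sum_{b\in B}|t_1(b)-t_2(b)|.$$
   Context: $\Phi$ is the standard normal CDF. For $\rho\in[-1,1]$, $\Gamma_\rho(q_1,q_2)=\Pr[x\le\Phi^{-1}(q_1),\,y\le\Phi^{-1}(q_2)]$ for jointly Gaussian standard normals $x,y$ with correlation $\rho$. A configuration is $\theta=(b_i,b_j,b_{ij})\in[-1,1]^3$ with $-1+|b_i+b_j|\le b_{ij}\le1-|b_i-b_j|$. Its relative pairwise bias is $\rho(\theta)=\frac{b_{ij}-b_ib_j}{\sqrt{(1-b_i^2)(1-b_j^2)}}$ (or $0$ if the denominator is $0$). A blueprint $\mathcal{D}=(D,B,\mu)$: $D$ a finitely supported distribution on configurations, $B$ the set of biases (first two coordinates) appearing in its support, $\mu$ a probability measure on $B$ with $\sum_b\mu(b)b=0$. For a threshold function $t:B\to[-1,1]$, $\mathsf{Soundness}(\mathcal{D},t)=\mathbb{E}_{\theta=(b_i,b_j,b_{ij})\sim D}[\frac{1-t(b_i)}{2}+\frac{1-t(b_j)}{2}-2\Gamma_{\rho(\theta)}(\frac{1-t(b_i)}{2},\frac{1-t(b_j)}{2})]$. *)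

theory Defs
  imports "HOL-Probability.Probability"
begin

definition std_normal :: "real measure" where
  "std_normal = density lborel (\<lambda>x. ennreal (std_normal_density x))"

definition Phi :: "real \<Rightarrow> real" where
  "Phi x = measure std_normal {..x}"

definition Phi_inv :: "real \<Rightarrow> ereal" where
  "Phi_inv q = (if q \<le> 0 then -\<infinity> else if q \<ge> 1 then \<infinity> else ereal (THE x. Phi x = q))"

text \<open>Jointly Gaussian standard normals \<open>(x,y)\<close> with correlation \<open>\<rho>\<close> are realised as
  \<open>x = u\<close>, \<open>y = \<rho> u + sqrt(1-\<rho>\<^sup>2) v\<close> with \<open>u, v\<close> independent standard normals.\<close>
definition Gamma :: "real \<Rightarrow> real \<Rightarrow> real \<Rightarrow> real" where
  "Gamma \<rho> q1 q2 = measure (std_normal \<Otimes>\<^sub>M std_normal)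
     {(u, v). ereal u \<le> Phi_inv q1 \<and> ereal (\<rho> * u + sqrt (1 - \<rho>\<^sup>2) * v) \<le> Phi_inv q2}"

type_synonym config = "real \<times> real \<times> real"

definition is_config :: "config \<Rightarrow> bool" where
  "is_config \<theta> = (case \<theta> of (b_i, b_j, bij_) \<Rightarrow>
     b_i \<in> {-1..1} \<and> b_j \<in> {-1..1} \<and> bij_ \<in> {-1..1} \<and>
     -1 + \<bar>b_i + b_j\<bar> \<le> bij_ \<and> bij_ \<le> 1 - \<bar>b_i - b_j\<bar>)"

definition rel_bias :: "config \<Rightarrow> real" where
  "rel_bias \<theta> = (case \<theta> of (b_i, b_j, bij_) \<Rightarrow>
     (let d = sqrt ((1 - b_i\<^sup>2) * (1 - b_j\<^sup>2)) in if d = 0 then 0 else (bij_ - b_i * b_j) / d))"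

definition biases :: "config pmf \<Rightarrow> real set" where
  "biases D = (\<lambda>\<theta>. fst \<theta>) ` set_pmf D \<union> (\<lambda>\<theta>. fst (snd \<theta>)) ` set_pmf D"

definition is_blueprint :: "config pmf \<Rightarrow> real set \<Rightarrow> real pmf \<Rightarrow> bool" where
  "is_blueprint D B \<mu> \<longleftrightarrow>
     finite (set_pmf D) \<and> (\<forall>\<theta>\<in>set_pmf D. is_config \<theta>) \<and>
     B = biases D \<and> set_pmf \<mu> \<subseteq> B \<and> (\<Sum>b\<in>B. pmf \<mu> b * b) = 0"

definition is_threshold :: "real set \<Rightarrow> (real \<Rightarrow> real) \<Rightarrow> bool" where
  "is_threshold B t \<longleftrightarrow> (\<forall>b\<in>B. t b \<in> {-1..1})"

definition Soundness :: "config pmf \<Rightarrow> (real \<Rightarrow> real) \<Rightarrow> real" where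
  "Soundness D t = measure_pmf.expectation D (\<lambda>\<theta>. case \<theta> of (b_i, b_j, bij_) \<Rightarrow>
      (1 - t b_i) / 2 + (1 - t b_j) / 2 - 2 * Gamma (rel_bias \<theta>) ((1 - t b_i) / 2) ((1 - t b_j) / 2))"

end

theory Submission
  imports Defs
begin


lemma sn_prob: "prob_space std_normal"
  unfolding std_normal_def by (rule prob_space_normal_density) simp

lemma sn_sets[simp]: "sets std_normal = sets borel"
  unfolding std_normal_def by simp

lemma sn_space[simp]: "space std_normal = UNIV"
  unfolding std_normal_def by simp

lemma sn_real_dist: "real_distribution std_normal"
  unfolding real_distribution_def real_distribution_axioms_def using sn_prob by simp

lemma Phi_cdf: "Phi = cdf std_normal"
  by (auto simp: Phi_def cdf_def)

lemma sn_single: "measure std_normal {x} = 0"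
proof -
  have "{x} \<in> null_sets std_normal"
  proof -
    have "AE z in lborel. z \<in> {x} \<longrightarrow> std_normal_density z = 0"
      using AE_lborel_singleton[of x] by eventually_elim auto
    then show "{x} \<in> null_sets std_normal" unfolding std_normal_def by (subst null_sets_density_iff) auto
  qed
  then show ?thesis by (simp add: measure_def null_setsD1)
qed

lemma Phi_cont: "isCont Phi x"
  unfolding Phi_cdf using finite_borel_measure.isCont_cdf[OF real_distribution.finite_borel_measure_M[OF sn_real_dist]] sn_single by simp

lemma Phi_mono: "x \<le> y \<Longrightarrow> Phi x \<le> Phi y"
  unfolding Phi_cdf by (rule finite_borel_measure.cdf_nondecreasing[OF real_distribution.finite_borel_measure_M[OF sn_real_dist]])

lemma Phi_strict: assumes "x < y" shows "Phi x < Phi y"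
proof -
  interpret real_distribution std_normal by (rule sn_real_dist)
  have eq: "Phi y - Phi x = measure std_normal {x<..y}"
    unfolding Phi_cdf using cdf_diff_eq[OF assms] by simp
  have "measure std_normal {x<..y} \<noteq> 0"
  proof
    assume "measure std_normal {x<..y} = 0"
    then have "{x<..y} \<in> null_sets std_normal"
      by (simp add: emeasure_eq_measure null_setsI)
    then have "AE z in lborel. z \<in> {x<..y} \<longrightarrow> std_normal_density z = 0"
      unfolding std_normal_def by (subst (asm) null_sets_density_iff) auto
    then have "AE z in lborel. z \<notin> {x<..y}"
      by eventually_elim (metis normal_density_pos zero_less_one less_irrefl)
    then have "{x<..y} \<in> null_sets lborel"
      using AE_iff_null_sets[of "{x<..y}" lborel] by simp
    then have "emeasure lborel {x<..y} = 0" by (rule null_setsD1)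
    then show False using assms by simp
  qed
  moreover have "measure std_normal {x<..y} \<ge> 0" by (rule measure_nonneg)
  ultimately show ?thesis using eq by linarith
qed

lemma Phi_lim_top: "(Phi \<longlongrightarrow> 1) at_top"
  unfolding Phi_cdf by (rule real_distribution.cdf_lim_at_top_prob[OF sn_real_dist])

lemma Phi_lim_bot: "(Phi \<longlongrightarrow> 0) at_bot"
  unfolding Phi_cdf by (rule finite_borel_measure.cdf_lim_at_bot[OF real_distribution.finite_borel_measure_M[OF sn_real_dist]])

lemma Phi_ex: assumes "0 < q" "q < 1" shows "\<exists>x. Phi x = q"
proof -
  have "eventually (\<lambda>x. Phi x < q) at_bot"
    using order_tendstoD(2)[OF Phi_lim_bot assms(1)] .
  then obtain a where a: "Phi a < q" by (auto simp: eventually_at_bot_linorder)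
  have "eventually (\<lambda>x. Phi x > q) at_top"
    using order_tendstoD(1)[OF Phi_lim_top assms(2)] .
  then obtain b0 where b0: "\<And>x. x \<ge> b0 \<Longrightarrow> Phi x > q" by (auto simp: eventually_at_top_linorder)
  define b where "b = max a b0"
  have "Phi b > q" using b0 by (simp add: b_def)
  have "a \<le> b" by (simp add: b_def)
  have "\<exists>x\<ge>a. x \<le> b \<and> Phi x = q"
    by (rule IVT) (use a \<open>Phi b > q\<close> \<open>a \<le> b\<close> Phi_cont in auto)
  then show ?thesis by blast
qed

lemma Phi_inv_eq: assumes "0 < q" "q < 1" shows "Phi_inv q = ereal (THE x. Phi x = q)" and "Phi (THE x. Phi x = q) = q"
proof -
  show "Phi_inv q = ereal (THE x. Phi x = q)" using assms by (simp add: Phi_inv_def)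
  obtain x where x: "Phi x = q" using Phi_ex[OF assms] by blast
  have uniq: "y = x" if "Phi y = q" for y
    using Phi_strict[of y x] Phi_strict[of x y] x that by (cases y x rule: linorder_cases) auto
  have "(THE y. Phi y = q) = x" by (rule the_equality[where P="\<lambda>y. Phi y = q", OF x uniq])
  then show "Phi (THE x. Phi x = q) = q" using x by simp
qed

lemma sn_Phi_inv: assumes "0 \<le> q" "q \<le> 1"
  shows "measure std_normal {x. ereal x \<le> Phi_inv q} = q"
proof -
  consider "q = 0" | "q = 1" | "0 < q \<and> q < 1" using assms by linarith
  then show ?thesis
  proof cases
    case 1 then show ?thesis by (simp add: Phi_inv_def)
  next
    case 2
    then have "{x. ereal x \<le> Phi_inv q} = space std_normal" by (simp add: Phi_inv_def)
    then show ?thesis using prob_space.prob_space[OF sn_prob] 2 by simp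
  next
    case 3
    then have "{x. ereal x \<le> Phi_inv q} = {..(THE x. Phi x = q)}" using Phi_inv_eq(1)[of q] by auto
    then show ?thesis using Phi_inv_eq(2)[of q] 3 by (simp add: Phi_def)
  qed
qed

lemma Phi_inv_mono: assumes "q \<le> q'" "0 \<le> q" "q' \<le> 1"
  shows "Phi_inv q \<le> Phi_inv q'"
proof -
  consider "q \<le> 0" | "q' \<ge> 1" | "0 < q \<and> q' < 1" by linarith
  then show ?thesis
  proof cases
    case 1 then show ?thesis by (simp add: Phi_inv_def)
  next
    case 2 then show ?thesis by (simp add: Phi_inv_def)
  next
    case 3
    then have h: "Phi_inv q = ereal (THE x. Phi x = q)" "Phi (THE x. Phi x = q) = q"
      "Phi_inv q' = ereal (THE x. Phi x = q')" "Phi (THE x. Phi x = q') = q'"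
      using Phi_inv_eq[of q] Phi_inv_eq[of q'] assms by auto
    have "(THE x. Phi x = q) \<le> (THE x. Phi x = q')"
    proof (rule ccontr)
      assume "\<not> ?thesis"
      then have "Phi (THE x. Phi x = q') < Phi (THE x. Phi x = q)" by (intro Phi_strict) simp
      then show False using h(2,4) assms by linarith
    qed
    then show ?thesis using h by simp
  qed
qed



lemma rel_bias_bound: assumes "is_config \<theta>" shows "\<bar>rel_bias \<theta>\<bar> \<le> 1"
proof -
  obtain a b c where th: "\<theta> = (a, b, c)" by (cases \<theta>) auto
  from assms have h: "a \<in> {-1..1}" "b \<in> {-1..1}" "-1 + \<bar>a + b\<bar> \<le> c" "c \<le> 1 - \<bar>a - b\<bar>"
    by (auto simp: is_config_def th)
  define p1 where "p1 = 1+a+b+c"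
  define p2 where "p2 = 1+a-b-c"
  define p3 where "p3 = 1-a+b-c"
  define p4 where "p4 = 1-a-b+c"
  have nn: "p1 \<ge> 0" "p2 \<ge> 0" "p3 \<ge> 0" "p4 \<ge> 0"
    using h by (auto simp: p1_def p2_def p3_def p4_def abs_if split: if_splits)
  define X where "X = p1+p2+p3"
  define Y where "Y = p2+p3+p4"
  have XY: "X * Y - p1 * p4 \<ge> 0"
  proof -
    have "p1 * p4 \<le> X * Y" using nn by (intro mult_mono) (auto simp: X_def Y_def)
    then show ?thesis by simp
  qed
  have ident: "16*((1-a*a)*(1-b*b)-(c-a*b)*(c-a*b)) =
     p1*p4*(X*Y-p1*p4)+(p2*p3)*(p1*X+p4*Y)+2*p1*p4*(p2*p3)"
    unfolding X_def Y_def p1_def p2_def p3_def p4_def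
    by (simp add: algebra_simps)
  have "0 \<le> p1*p4*(X*Y-p1*p4)+(p2*p3)*(p1*X+p4*Y)+2*p1*p4*(p2*p3)"
    using nn XY by (intro mult_nonneg_nonneg add_nonneg_nonneg) (auto simp: X_def Y_def)
  then have sq: "(c-a*b)^2 \<le> (1-a^2)*(1-b^2)" using ident by (simp add: power2_eq_square)
  define d where "d = sqrt ((1 - a\<^sup>2) * (1 - b\<^sup>2))"
  have "sqrt ((c-a*b)^2) \<le> d" unfolding d_def by (rule real_sqrt_le_mono[OF sq])
  then have "\<bar>c - a*b\<bar> \<le> d" by (simp only: real_sqrt_abs)
  moreover have "d \<ge> 0" using calculation by (rule order.trans[rotated]) simp
  ultimately show ?thesis
    by (auto simp: rel_bias_def th Let_def d_def[symmetric] abs_divide divide_le_eq_1)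
qed



abbreviation "MM \<equiv> std_normal \<Otimes>\<^sub>M std_normal"

lemma MM_pps: "pair_prob_space std_normal std_normal"
  by (simp add: pair_prob_space_def pair_sigma_finite_def sn_prob prob_space_imp_sigma_finite)

lemma MM_prob: "prob_space MM"
proof -
  interpret pair_prob_space std_normal std_normal by (rule MM_pps)
  show ?thesis by (rule prob_space_axioms)
qed

lemma MM_space[simp]: "space MM = UNIV"
  by (simp add: space_pair_measure)

lemma sets_MM: "sets MM = sets (borel \<Otimes>\<^sub>M borel)"
  by (rule sets_pair_measure_cong) auto

lemma meas_MM: "measurable MM N = measurable (borel \<Otimes>\<^sub>M borel) N"
  by (rule measurable_cong_sets) (auto simp: sets_MM)

lemma distr_fst: "distr MM lborel fst = std_normal"
proof -
  have "distr MM lborel fst = distr MM std_normal fst" by (rule distr_cong) auto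
  also have "\<dots> = std_normal" by (rule prob_space.distr_pair_fst[OF sn_prob])
  finally show ?thesis .
qed

lemma distr_snd: "distr MM lborel snd = std_normal"
proof -
  interpret pair_prob_space std_normal std_normal by (rule MM_pps)
  have "distr MM lborel snd = distr MM std_normal snd" by (rule distr_cong) auto
  also have "\<dots> = std_normal"
  proof (intro measure_eqI)
    fix A assume A: "A \<in> sets (distr MM std_normal snd)"
    then have "emeasure (distr MM std_normal snd) A = emeasure MM (space std_normal \<times> A)"
      by (auto simp add: emeasure_distr space_pair_measure intro!: arg_cong2[where f=emeasure])
    moreover have "emeasure MM (space std_normal \<times> A) = emeasure std_normal (space std_normal) * emeasure std_normal A"
      by (rule sigma_finite_measure.emeasure_pair_measure_Times[OF prob_space_imp_sigma_finite[OF sn_prob]]) (use A in auto)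
    ultimately show "emeasure (distr MM std_normal snd) A = emeasure std_normal A"
      using M1.emeasure_space_1 by simp
  qed simp
  finally show ?thesis .
qed

lemma dist_fst: "distributed MM lborel fst std_normal_density"
  unfolding distributed_def using distr_fst by (simp add: std_normal_def)

lemma dist_snd: "distributed MM lborel snd std_normal_density"
  unfolding distributed_def using distr_snd by (simp add: std_normal_def)

lemma indep_fst_snd: "prob_space.indep_var MM borel fst borel snd"
proof -
  interpret prob_space MM by (rule MM_prob)
  have 1: "distr MM borel fst = std_normal"
    using distr_fst by (metis distr_cong sets_lborel)
  have 2: "distr MM borel snd = std_normal"
    using distr_snd by (metis distr_cong sets_lborel)
  have 3: "distr MM (borel \<Otimes>\<^sub>M borel) (\<lambda>x. x) = MM"
    by (rule distr_id2) (auto intro!: sets_pair_measure_cong)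
  have 4: "fst \<in> measurable MM borel" "snd \<in> measurable MM borel" unfolding meas_MM by measurable
  show ?thesis
    by (subst indep_var_distribution_eq) (simp add: 1 2 3 4)
qed

lemma dist_y: assumes "\<bar>\<rho>\<bar> \<le> 1"
  shows "distributed MM lborel (\<lambda>x. \<rho> * fst x + sqrt (1 - \<rho>\<^sup>2) * snd x) std_normal_density"
proof -
  interpret prob_space MM by (rule MM_prob)
  define s where "s = sqrt (1 - \<rho>\<^sup>2)"
  have rr: "\<rho>\<^sup>2 \<le> 1" using power2_le_iff_abs_le[of 1 \<rho>] assms by simp
  consider "\<rho> = 0" | "\<bar>\<rho>\<bar> = 1" | "0 < \<bar>\<rho>\<bar> \<and> \<bar>\<rho>\<bar> < 1" using assms by linarith
  then show ?thesis
  proof cases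
    case 1 then show ?thesis using dist_snd by simp
  next
    case 2
    then have "\<rho>\<^sup>2 = 1" by (metis abs_power2 one_power2 power2_abs)
    then have e: "(\<lambda>x. \<rho> * fst x + sqrt (1 - \<rho>\<^sup>2) * snd x) = (\<lambda>x. 0 + \<rho> * fst x)" by simp
    have "distributed MM lborel (\<lambda>x. 0 + \<rho> * fst x) (normal_density (0 + \<rho> * 0) (\<bar>\<rho>\<bar> * 1))"
      by (rule normal_density_affine[OF dist_fst]) (use 2 in auto)
    then show ?thesis unfolding e using 2 by simp
  next
    case 3
    have sp: "s > 0" unfolding s_def using 3 by (simp add: abs_square_less_1)
    have sq: "\<rho>\<^sup>2 + s\<^sup>2 = 1" unfolding s_def using rr by simp
    have X: "distributed MM lborel (\<lambda>x. 0 + \<rho> * fst x) (normal_density (0 + \<rho> * 0) (\<bar>\<rho>\<bar> * 1))"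
      by (rule normal_density_affine[OF dist_fst]) (use 3 in auto)
    have Y: "distributed MM lborel (\<lambda>x. 0 + s * snd x) (normal_density (0 + s * 0) (\<bar>s\<bar> * 1))"
      by (rule normal_density_affine[OF dist_snd]) (use sp in auto)
    have ind: "indep_var borel ((\<lambda>x. 0 + \<rho> * x) \<circ> fst) borel ((\<lambda>x. 0 + s * x) \<circ> snd)"
      by (rule indep_var_compose[OF indep_fst_snd]) auto
    have "distributed MM lborel (\<lambda>x. (0 + \<rho> * fst x) + (0 + s * snd x))
        (normal_density (0 + 0) (sqrt ((\<bar>\<rho>\<bar> * 1)\<^sup>2 + (\<bar>s\<bar> * 1)\<^sup>2)))"
      by (rule add_indep_normal) (use ind X Y 3 sp in \<open>auto simp: o_def\<close>)
    then show ?thesis using sq sp by (simp add: s_def)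
  qed
qed

lemma distr_y: assumes "\<bar>\<rho>\<bar> \<le> 1"
  shows "distr MM lborel (\<lambda>x. \<rho> * fst x + sqrt (1 - \<rho>\<^sup>2) * snd x) = std_normal"
  using dist_y[OF assms] unfolding distributed_def std_normal_def by simp



lemma ereal_le_sets: "{x::real. ereal x \<le> c} \<in> sets borel"
  by measurable

lemma gen:
  fixes g1 g2 :: "real \<times> real \<Rightarrow> real"
  assumes g1m: "g1 \<in> borel_measurable MM" and g2m: "g2 \<in> borel_measurable MM"
    and d: "distr MM lborel g1 = std_normal" and cc: "c \<le> c'"
  shows "measure MM {\<omega>. ereal (g1 \<omega>) \<le> c \<and> ereal (g2 \<omega>) \<le> e} \<le> measure MM {\<omega>. ereal (g1 \<omega>) \<le> c' \<and> ereal (g2 \<omega>) \<le> e}"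
    and "measure MM {\<omega>. ereal (g1 \<omega>) \<le> c' \<and> ereal (g2 \<omega>) \<le> e} - measure MM {\<omega>. ereal (g1 \<omega>) \<le> c \<and> ereal (g2 \<omega>) \<le> e}
         \<le> measure std_normal {x. ereal x \<le> c'} - measure std_normal {x. ereal x \<le> c}"
proof -
  interpret prob_space MM by (rule MM_prob)
  interpret N: prob_space std_normal by (rule sn_prob)
  note [measurable] = g1m g2m
  define S where "S c = {\<omega>. ereal (g1 \<omega>) \<le> c \<and> ereal (g2 \<omega>) \<le> e}" for c
  have Sm: "S c \<in> sets MM" for c
  proof -
    have "{\<omega> \<in> space MM. ereal (g1 \<omega>) \<le> c \<and> ereal (g2 \<omega>) \<le> e} \<in> sets MM" by measurable
    then show ?thesis by (simp add: S_def)
  qed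
  have sub: "S c \<subseteq> S c'" using cc by (auto simp: S_def)
  show "measure MM {\<omega>. ereal (g1 \<omega>) \<le> c \<and> ereal (g2 \<omega>) \<le> e} \<le> measure MM {\<omega>. ereal (g1 \<omega>) \<le> c' \<and> ereal (g2 \<omega>) \<le> e}"
    using finite_measure_mono[OF sub Sm] by (simp add: S_def)
  define R where "R = {x::real. ereal x \<le> c'} - {x. ereal x \<le> c}"
  have Rm: "R \<in> sets borel" unfolding R_def using ereal_le_sets by auto
  have "measure MM (S c') - measure MM (S c) = measure MM (S c' - S c)"
    using finite_measure_Diff[OF Sm Sm sub] by simp
  also have "\<dots> \<le> measure MM (g1 -` R \<inter> space MM)"
  proof (rule finite_measure_mono)
    show "S c' - S c \<subseteq> g1 -` R \<inter> space MM" by (auto simp: S_def R_def)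
    show "g1 -` R \<inter> space MM \<in> sets MM" using Rm by measurable
  qed
  also have "\<dots> = measure (distr MM lborel g1) R"
    by (rule measure_distr[symmetric]) (use Rm in auto)
  also have "\<dots> = measure std_normal R" by (simp add: d)
  also have "\<dots> = measure std_normal {x. ereal x \<le> c'} - measure std_normal {x. ereal x \<le> c}"
    unfolding R_def
    by (rule N.finite_measure_Diff) (use ereal_le_sets cc in \<open>auto intro: order_trans\<close>)
  finally show "measure MM {\<omega>. ereal (g1 \<omega>) \<le> c' \<and> ereal (g2 \<omega>) \<le> e} - measure MM {\<omega>. ereal (g1 \<omega>) \<le> c \<and> ereal (g2 \<omega>) \<le> e}
         \<le> measure std_normal {x. ereal x \<le> c'} - measure std_normal {x. ereal x \<le> c}"
    by (simp add: S_def)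
qed

lemma gamma_eq: "Gamma \<rho> q1 q2 = measure MM {\<omega>. ereal (fst \<omega>) \<le> Phi_inv q1 \<and> ereal (\<rho> * fst \<omega> + sqrt (1 - \<rho>\<^sup>2) * snd \<omega>) \<le> Phi_inv q2}"
  unfolding Gamma_def by (rule arg_cong[where f="measure MM"]) auto

lemma gamma_eq2: "Gamma \<rho> q1 q2 = measure MM {\<omega>. ereal (\<rho> * fst \<omega> + sqrt (1 - \<rho>\<^sup>2) * snd \<omega>) \<le> Phi_inv q2 \<and> ereal (fst \<omega>) \<le> Phi_inv q1}"
  unfolding Gamma_def by (rule arg_cong[where f="measure MM"]) auto

lemma y_meas: "(\<lambda>\<omega>. \<rho> * fst \<omega> + sqrt (1 - \<rho>\<^sup>2) * snd \<omega>) \<in> borel_measurable MM"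
  unfolding meas_MM by measurable

lemma fst_meas: "fst \<in> borel_measurable MM"
  unfolding meas_MM by measurable

lemma gamma_lip1:
  assumes "0 \<le> q1" "q1 \<le> q1'" "q1' \<le> 1"
  shows "0 \<le> Gamma \<rho> q1' q2 - Gamma \<rho> q1 q2" "Gamma \<rho> q1' q2 - Gamma \<rho> q1 q2 \<le> q1' - q1"
proof -
  have m: "Phi_inv q1 \<le> Phi_inv q1'" by (rule Phi_inv_mono) (use assms in auto)
  note g = gen[OF fst_meas y_meas distr_fst m, of \<rho> "Phi_inv q2"]
  show "0 \<le> Gamma \<rho> q1' q2 - Gamma \<rho> q1 q2" using g(1) unfolding gamma_eq by simp
  show "Gamma \<rho> q1' q2 - Gamma \<rho> q1 q2 \<le> q1' - q1" using g(2) unfolding gamma_eq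
    using sn_Phi_inv[of q1] sn_Phi_inv[of q1'] assms by simp
qed

lemma gamma_lip2:
  assumes "0 \<le> q2" "q2 \<le> q2'" "q2' \<le> 1" "\<bar>\<rho>\<bar> \<le> 1"
  shows "0 \<le> Gamma \<rho> q1 q2' - Gamma \<rho> q1 q2" "Gamma \<rho> q1 q2' - Gamma \<rho> q1 q2 \<le> q2' - q2"
proof -
  have m: "Phi_inv q2 \<le> Phi_inv q2'" by (rule Phi_inv_mono) (use assms in auto)
  note g = gen[OF y_meas fst_meas distr_y[OF assms(4)] m, of "Phi_inv q1"]
  show "0 \<le> Gamma \<rho> q1 q2' - Gamma \<rho> q1 q2" using g(1) unfolding gamma_eq2 by simp
  show "Gamma \<rho> q1 q2' - Gamma \<rho> q1 q2 \<le> q2' - q2" using g(2) unfolding gamma_eq2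
    using sn_Phi_inv[of q2] sn_Phi_inv[of q2'] assms by simp
qed

lemma F_bound:
  assumes "q1 \<in> {0..1}" "q1' \<in> {0..1}" "q2 \<in> {0..1}" "q2' \<in> {0..1}" "\<bar>\<rho>\<bar> \<le> 1"
  shows "\<bar>(q1 + q2 - 2 * Gamma \<rho> q1 q2) - (q1' + q2' - 2 * Gamma \<rho> q1' q2')\<bar> \<le> \<bar>q1 - q1'\<bar> + \<bar>q2 - q2'\<bar>"
proof -
  have A: "\<bar>(q1 - q1') - 2 * (Gamma \<rho> q1 q2 - Gamma \<rho> q1' q2)\<bar> \<le> \<bar>q1 - q1'\<bar>"
  proof (cases "q1 \<le> q1'")
    case True
    then show ?thesis using gamma_lip1[of q1 q1' \<rho> q2] assms by auto
  next
    case False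
    then show ?thesis using gamma_lip1[of q1' q1 \<rho> q2] assms by auto
  qed
  have B: "\<bar>(q2 - q2') - 2 * (Gamma \<rho> q1' q2 - Gamma \<rho> q1' q2')\<bar> \<le> \<bar>q2 - q2'\<bar>"
  proof (cases "q2 \<le> q2'")
    case True
    then show ?thesis using gamma_lip2[of q2 q2' \<rho> q1'] assms by auto
  next
    case False
    then show ?thesis using gamma_lip2[of q2' q2 \<rho> q1'] assms by auto
  qed
  have "(q1 + q2 - 2 * Gamma \<rho> q1 q2) - (q1' + q2' - 2 * Gamma \<rho> q1' q2') =
     ((q1 - q1') - 2 * (Gamma \<rho> q1 q2 - Gamma \<rho> q1' q2)) + ((q2 - q2') - 2 * (Gamma \<rho> q1' q2 - Gamma \<rho> q1' q2'))"
    by simp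
  then show ?thesis using A B by linarith
qed



lemma half_abs: "\<bar>(1 - x) / 2 - (1 - y) / 2\<bar> = \<bar>x - y\<bar> / (2::real)"
proof -
  have e: "(1 - x) / 2 - (1 - y) / 2 = (y - x) / (2::real)" by (simp add: field_simps)
  show ?thesis unfolding e by (simp add: abs_minus_commute)
qed

theorem lemma2p15:
  fixes D :: "config pmf" and B :: "real set" and \<mu> :: "real pmf"
    and t1 t2 :: "real \<Rightarrow> real"
  assumes "is_blueprint D B \<mu>"
    and "is_threshold B t1" and "is_threshold B t2"
  shows "\<bar>Soundness D t1 - Soundness D t2\<bar> \<le> (\<Sum>b\<in>B. \<bar>t1 b - t2 b\<bar>)"
proof -
  have finD: "finite (set_pmf D)" and cfg: "\<And>\<theta>. \<theta> \<in> set_pmf D \<Longrightarrow> is_config \<theta>"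
    and Bdef: "B = biases D"
    using assms(1) by (auto simp: is_blueprint_def)
  have finB: "finite B" unfolding Bdef biases_def using finD by auto
  define C where "C = (\<Sum>b\<in>B. \<bar>t1 b - t2 b\<bar>)"
  have memC: "\<bar>t1 b - t2 b\<bar> \<le> C" if "b \<in> B" for b
    unfolding C_def by (rule member_le_sum[OF that _ finB]) simp
  define f where "f t \<theta> = (case \<theta> of (b_i, b_j, bij_) \<Rightarrow>
      (1 - t b_i) / 2 + (1 - t b_j) / 2 - 2 * Gamma (rel_bias \<theta>) ((1 - t b_i) / 2) ((1 - t b_j) / 2))" for t :: "real \<Rightarrow> real" and \<theta> :: config
  have S: "Soundness D t = measure_pmf.expectation D (f t)" for t
    unfolding Soundness_def f_def by simp
  have int: "integrable (measure_pmf D) g" for g :: "config \<Rightarrow> real"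
    by (rule integrable_measure_pmf_finite[OF finD])
  have pw: "\<bar>f t1 \<theta> - f t2 \<theta>\<bar> \<le> C" if th: "\<theta> \<in> set_pmf D" for \<theta>
  proof -
    obtain a b c where thd: "\<theta> = (a, b, c)" by (cases \<theta>) auto
    have aB: "a \<in> B" and bB: "b \<in> B" unfolding Bdef biases_def using th thd by force+
    have r: "\<bar>rel_bias \<theta>\<bar> \<le> 1" by (rule rel_bias_bound[OF cfg[OF th]])
    have t1a: "t1 a \<in> {-1..1}" "t2 a \<in> {-1..1}" "t1 b \<in> {-1..1}" "t2 b \<in> {-1..1}"
      using assms(2,3) aB bB by (auto simp: is_threshold_def)
    have "\<bar>f t1 \<theta> - f t2 \<theta>\<bar> \<le> \<bar>(1 - t1 a) / 2 - (1 - t2 a) / 2\<bar> + \<bar>(1 - t1 b) / 2 - (1 - t2 b) / 2\<bar>"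
      unfolding f_def thd prod.case
      by (rule F_bound) (use t1a r thd in auto)
    also have "\<dots> = \<bar>t1 a - t2 a\<bar> / 2 + \<bar>t1 b - t2 b\<bar> / 2" by (simp only: half_abs)
    also have "\<dots> \<le> C" using memC[OF aB] memC[OF bB] by simp
    finally show ?thesis .
  qed
  have "\<bar>Soundness D t1 - Soundness D t2\<bar> = \<bar>measure_pmf.expectation D (\<lambda>\<theta>. f t1 \<theta> - f t2 \<theta>)\<bar>"
    unfolding S by (subst Bochner_Integration.integral_diff[OF int int]) simp
  also have "\<dots> \<le> measure_pmf.expectation D (\<lambda>\<theta>. \<bar>f t1 \<theta> - f t2 \<theta>\<bar>)"
    by (rule integral_abs_bound)
  also have "\<dots> \<le> C"
    by (rule measure_pmf.integral_le_const[OF int]) (use pw in \<open>simp add: AE_measure_pmf_iff\<close>)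
  finally show ?thesis unfolding C_def .
qed

end
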